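(* Let $G$ be a connected graph of order $n \ge 2$, and let $k$ be a positive integer. Then $\dim_{k,f}(G)=\frac{n}{2}$ if and only if $G \in H[\mathcal{K} \cup \overline{\mathcal{K}}]$ for some connected graph $H$.
   Context: All graphs are finite, simple, undirected and connected. $d(x,y)$ is the length of a shortest $x$–$y$ path in $G$. For a positive integer $k$, $d_k(x,y)=\min\{d(x,y),k+1\}$ and $R_k\{x,y\}=\{z\in V(G): d_k(x,z)\neq d_k(y,z)\}$. For a function $g$ on $V(G)$ and $U\subseteq V(G)$, $g(U)=\sum_{s\in U}g(s)$. A function $h:V(G)\to[0,1]$ is a $k$-truncated resolving function of $G$ if $h(R_k\{x,y\})\ge 1$ for all distinct $x,y\in V(G)$; $\dim_{k,f}(G)$ is the minimum of $h(V(G))$ over all such $h$. Let $\mathcal{K}=\{K_a: a\ge 2\}$ and $\overline{\mathcal{K}}=\{\overline{K}_b: b\ge 2\}$. For a connected graph $H$, $H[\mathcal{K}\cup\overline{\mathcal{K}}]$ is the family of graphs obtained from $H$ by replacing each vertex $u_i\in V(H)$ by a graph $H_i\in\mathcal{K}\cup\overline{\mathcal{K}}$, where each vertex of $H_i$ is adjacent to each vertex of $H_j$ ($i\neq j$) if and only if $u_iu_j\in E(H)$. *)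

theory Defs
  imports Complex_Main
begin

definition simple_graph :: "'a set \<Rightarrow> ('a \<Rightarrow> 'a \<Rightarrow> bool) \<Rightarrow> bool" where
  "simple_graph V E \<longleftrightarrow> finite V \<and> (\<forall>x y. E x y \<longrightarrow> x \<in> V \<and> y \<in> V)
     \<and> (\<forall>x y. E x y \<longrightarrow> E y x) \<and> (\<forall>x. \<not> E x x)"

definition walk_of_length :: "'a set \<Rightarrow> ('a \<Rightarrow> 'a \<Rightarrow> bool) \<Rightarrow> 'a \<Rightarrow> 'a \<Rightarrow> nat \<Rightarrow> bool" where
  "walk_of_length V E x y n \<longleftrightarrow> (\<exists>p. length p = Suc n \<and> hd p = x \<and> last p = y \<and> set p \<subseteq> V
      \<and> (\<forall>i<n. E (p ! i) (p ! Suc i)))"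

definition graph_connected :: "'a set \<Rightarrow> ('a \<Rightarrow> 'a \<Rightarrow> bool) \<Rightarrow> bool" where
  "graph_connected V E \<longleftrightarrow> V \<noteq> {} \<and> (\<forall>x\<in>V. \<forall>y\<in>V. \<exists>n. walk_of_length V E x y n)"

definition gdist :: "'a set \<Rightarrow> ('a \<Rightarrow> 'a \<Rightarrow> bool) \<Rightarrow> 'a \<Rightarrow> 'a \<Rightarrow> nat" where
  "gdist V E x y = (LEAST n. walk_of_length V E x y n)"

definition tdist :: "nat \<Rightarrow> 'a set \<Rightarrow> ('a \<Rightarrow> 'a \<Rightarrow> bool) \<Rightarrow> 'a \<Rightarrow> 'a \<Rightarrow> nat" where
  "tdist k V E x y = min (gdist V E x y) (k + 1)"

definition resolving_set_k :: "nat \<Rightarrow> 'a set \<Rightarrow> ('a \<Rightarrow> 'a \<Rightarrow> bool) \<Rightarrow> 'a \<Rightarrow> 'a \<Rightarrow> 'a set" where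
  "resolving_set_k k V E x y = {z \<in> V. tdist k V E x z \<noteq> tdist k V E y z}"

definition k_trunc_resolving_function :: "nat \<Rightarrow> 'a set \<Rightarrow> ('a \<Rightarrow> 'a \<Rightarrow> bool) \<Rightarrow> ('a \<Rightarrow> real) \<Rightarrow> bool" where
  "k_trunc_resolving_function k V E h \<longleftrightarrow> (\<forall>v\<in>V. 0 \<le> h v \<and> h v \<le> 1)
     \<and> (\<forall>x\<in>V. \<forall>y\<in>V. x \<noteq> y \<longrightarrow> sum h (resolving_set_k k V E x y) \<ge> 1)"

definition frac_trunc_dim :: "nat \<Rightarrow> 'a set \<Rightarrow> ('a \<Rightarrow> 'a \<Rightarrow> bool) \<Rightarrow> real" where
  "frac_trunc_dim k V E = Inf {sum h V | h. k_trunc_resolving_function k V E h}"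

text \<open>G belongs to H[K \<union> Kbar] for some connected graph H: there is a connected graph H
  and a map phi from V(G) onto V(H) whose fibres (the replaced vertices) have size at least 2,
  each fibre inducing a complete or an edgeless graph, and vertices in distinct fibres
  adjacent iff their fibres are adjacent in H.  (Vertices of H are labelled by elements of 'a,
  which is no loss since |V(H)| \<le> |V(G)|.)\<close>
definition in_blowup_family :: "'a set \<Rightarrow> ('a \<Rightarrow> 'a \<Rightarrow> bool) \<Rightarrow> bool" where
  "in_blowup_family V E \<longleftrightarrow> (\<exists>VH EH (\<phi>::'a \<Rightarrow> 'a).
      simple_graph VH EH \<and> graph_connected VH EH \<and> \<phi> ` V = VH
      \<and> (\<forall>u\<in>VH. card {x\<in>V. \<phi> x = u} \<ge> 2
            \<and> ((\<forall>x\<in>V. \<forall>y\<in>V. \<phi> x = u \<and> \<phi> y = u \<and> x \<noteq> y \<longrightarrow> E x y)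
               \<or> (\<forall>x\<in>V. \<forall>y\<in>V. \<phi> x = u \<and> \<phi> y = u \<longrightarrow> \<not> E x y)))
      \<and> (\<forall>x\<in>V. \<forall>y\<in>V. \<phi> x \<noteq> \<phi> y \<longrightarrow> (E x y \<longleftrightarrow> EH (\<phi> x) (\<phi> y))))"

end

theory Submission
  imports Defs
begin


lemma sgD: assumes "simple_graph V E"
  shows "finite V" "E a b \<Longrightarrow> a \<in> V" "E a b \<Longrightarrow> b \<in> V" "E a b \<Longrightarrow> E b a" "\<not> E a a"
  using assms unfolding simple_graph_def by blast+

lemma walk_iff: assumes G: "simple_graph V E"
  shows "walk_of_length V E x y n \<longleftrightarrow> x \<in> V \<and> (E^^n) x y"
proof
  assume "walk_of_length V E x y n"
  then obtain p where p: "length p = Suc n" "hd p = x" "last p = y" "set p \<subseteq> V"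
    "\<forall>i<n. E (p ! i) (p ! Suc i)" unfolding walk_of_length_def by blast
  have "p \<noteq> []" using p(1) by auto
  then have "p ! 0 = x" "p ! n = y" using p by (auto simp: hd_conv_nth last_conv_nth)
  then have "(E^^n) x y" unfolding relpowp_fun_conv using p(5) by blast
  moreover have "x \<in> V" using p(2,4) \<open>p \<noteq> []\<close> by auto
  ultimately show "x \<in> V \<and> (E^^n) x y" by blast
next
  assume a: "x \<in> V \<and> (E^^n) x y"
  then obtain f where f: "f 0 = x" "f n = y" "\<forall>i<n. E (f i) (f (Suc i))"
    unfolding relpowp_fun_conv by blast
  define p where "p = map f [0..<Suc n]"
  have inV: "f i \<in> V" if "i \<le> n" for i
  proof (cases i)
    case 0 then show ?thesis using a f by simp
  next
    case (Suc j) then show ?thesis using f(3) that sgD(3)[OF G] by (metis Suc_le_lessD)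
  qed
  have "length p = Suc n" "hd p = x" "last p = y" "set p \<subseteq> V"
    "\<forall>i<n. E (p ! i) (p ! Suc i)"
    using f inV unfolding p_def by (auto simp: hd_map last_map nth_append simp del: upt_Suc)
  then show "walk_of_length V E x y n" unfolding walk_of_length_def by blast
qed

lemma conn_rel: assumes G: "simple_graph V E" and C: "graph_connected V E" and "x \<in> V" "y \<in> V"
  shows "\<exists>n. (E^^n) x y"
  using assms walk_iff[OF G] unfolding graph_connected_def by blast

lemma gdist_alt: assumes G: "simple_graph V E" and "x \<in> V"
  shows "gdist V E x y = (LEAST n. (E^^n) x y)"
  unfolding gdist_def using assms walk_iff[OF G] by (intro arg_cong[where f=Least]) auto

lemma gdist_ex: assumes G: "simple_graph V E" and C: "graph_connected V E" and "x \<in> V" "y \<in> V"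
  shows "(E^^(gdist V E x y)) x y"
  using conn_rel[OF assms] gdist_alt[OF G assms(3)] by (metis LeastI)

lemma gdist_le: assumes G: "simple_graph V E" and "x \<in> V" "(E^^n) x y"
  shows "gdist V E x y \<le> n"
  using assms gdist_alt[OF G assms(2)] by (simp add: Least_le)

lemma gdist_refl: assumes G: "simple_graph V E" and "x \<in> V" shows "gdist V E x x = 0"
  using gdist_le[OF G assms(2), of 0] by simp

lemma gdist_pos: assumes G: "simple_graph V E" and C: "graph_connected V E" and "x \<in> V" "y \<in> V" "x \<noteq> y"
  shows "gdist V E x y \<ge> 1"
  using gdist_ex[OF G C assms(3,4)] assms(5) by (cases "gdist V E x y") auto

lemma gdist_ex0: assumes G: "simple_graph V E" and "x \<in> V" "(E^^m) x y"
  shows "(E^^(gdist V E x y)) x y"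
  using assms gdist_alt[OF G assms(2)] by (metis LeastI)

lemma gdist_one: assumes G: "simple_graph V E" and "E x y"
  shows "gdist V E x y = 1"
proof -
  have xV: "x \<in> V" and ne: "x \<noteq> y" using sgD[OF G] assms by metis+
  have e1: "(E^^1) x y" using assms by (auto simp: relpowp_1)
  have "gdist V E x y \<le> 1" using gdist_le[OF G xV e1] .
  moreover have "gdist V E x y \<noteq> 0"
  proof
    assume "gdist V E x y = 0"
    then show False using gdist_ex0[OF G xV e1] ne by simp
  qed
  ultimately show ?thesis by simp
qed

lemma gdist_two: assumes G: "simple_graph V E" and C: "graph_connected V E" and "x \<in> V" "y \<in> V" "x \<noteq> y" "\<not> E x y"
  shows "gdist V E x y \<ge> 2"
proof -
  have "gdist V E x y \<noteq> 1" using gdist_ex[OF G C assms(3,4)] assms(6) by (metis relpowp_1)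
  then show ?thesis using gdist_pos[OF G C assms(3-5)] by simp
qed

definition tw :: "'a set \<Rightarrow> ('a \<Rightarrow> 'a \<Rightarrow> bool) \<Rightarrow> 'a \<Rightarrow> 'a \<Rightarrow> bool" where
  "tw V E x y \<longleftrightarrow> x \<in> V \<and> y \<in> V \<and> (\<forall>z\<in>V. z \<noteq> x \<and> z \<noteq> y \<longrightarrow> (E x z \<longleftrightarrow> E y z))"

lemma tw_sym: "tw V E x y \<Longrightarrow> tw V E y x" unfolding tw_def by blast

lemma tw_trans: assumes G: "simple_graph V E" and "tw V E x y" "tw V E y z" shows "tw V E x z"
proof (cases "x = y \<or> y = z \<or> x = z")
  case True then show ?thesis using assms unfolding tw_def by blast
next
  case False
  have "E x y \<longleftrightarrow> E z y" using assms False sgD(4)[OF G] unfolding tw_def by metis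
  then show ?thesis using assms False unfolding tw_def by metis
qed

lemma tw_le: assumes G: "simple_graph V E" and C: "graph_connected V E" and t: "tw V E x y"
  and "z \<in> V" "z \<noteq> x" "z \<noteq> y"
  shows "gdist V E y z \<le> gdist V E x z"
proof -
  have xV: "x \<in> V" and yV: "y \<in> V" using t unfolding tw_def by auto
  have "gdist V E x z \<ge> 1" using gdist_pos[OF G C xV assms(4)] assms(5) by auto
  then obtain m where m: "gdist V E x z = Suc m" by (metis Suc_le_D One_nat_def)
  then obtain w where w: "E x w" "(E^^m) w z" using gdist_ex[OF G C xV assms(4)] relpowp_Suc_D2 by metis
  show ?thesis
  proof (cases "w = y")
    case True then show ?thesis using gdist_le[OF G yV w(2)[unfolded True]] m by simp
  next
    case False
    have "w \<noteq> x" "w \<in> V" using w(1) sgD[OF G] by metis+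
    then have "E y w" using t False w(1) unfolding tw_def by blast
    then have "(E^^Suc m) y z" using w(2) relpowp_Suc_I2 by metis
    then show ?thesis using gdist_le[OF G yV] m by metis
  qed
qed

lemma tw_eq: assumes G: "simple_graph V E" and C: "graph_connected V E" and t: "tw V E x y"
  and "z \<in> V" "z \<noteq> x" "z \<noteq> y"
  shows "gdist V E y z = gdist V E x z"
  using tw_le[OF G C t assms(4-6)] tw_le[OF G C tw_sym[OF t] assms(4,6,5)] by simp

lemma tw_R: assumes G: "simple_graph V E" and C: "graph_connected V E" and t: "tw V E x y"
  shows "resolving_set_k k V E x y \<subseteq> {x, y}"
proof
  fix z assume "z \<in> resolving_set_k k V E x y"
  then show "z \<in> {x, y}" using tw_eq[OF G C t, of z] unfolding resolving_set_k_def tdist_def by (cases "z = x"; cases "z = y") auto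
qed

lemma xy_R: assumes G: "simple_graph V E" and C: "graph_connected V E" and "x \<in> V" "y \<in> V" "x \<noteq> y"
  shows "x \<in> resolving_set_k k V E x y" "y \<in> resolving_set_k k V E x y"
proof -
  have "gdist V E x y \<ge> 1" "gdist V E y x \<ge> 1" using gdist_pos[OF G C] assms by auto
  then show "x \<in> resolving_set_k k V E x y" "y \<in> resolving_set_k k V E x y"
    using gdist_refl[OF G] assms unfolding resolving_set_k_def tdist_def by (auto simp: min_def)
qed



lemma pair_ge: assumes G: "simple_graph V E" and C: "graph_connected V E" and t: "tw V E x y"
  and ne: "x \<noteq> y" and h: "k_trunc_resolving_function k V E h"
  shows "h x + h y \<ge> 1"
proof -
  have V: "x \<in> V" "y \<in> V" using t unfolding tw_def by auto
  have "1 \<le> sum h (resolving_set_k k V E x y)" using h V ne unfolding k_trunc_resolving_function_def by blast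
  also have "\<dots> \<le> sum h {x, y}"
    by (rule sum_mono2) (use tw_R[OF G C t] h V in \<open>auto simp: k_trunc_resolving_function_def\<close>)
  finally show ?thesis using ne by simp
qed

lemma sum_lower: assumes G: "simple_graph V E" and C: "graph_connected V E"
  and tw_all: "\<forall>x\<in>V. \<exists>y\<in>V. y \<noteq> x \<and> tw V E x y"
  and h: "k_trunc_resolving_function k V E h"
  shows "sum h V \<ge> real (card V) / 2"
proof -
  have fin: "finite V" using sgD[OF G] by simp
  define g where "g x = h x - 1/2" for x
  define A where "A = {x\<in>V. h x < 1/2}"
  define t where "t x = (SOME y. y \<in> V \<and> y \<noteq> x \<and> tw V E x y)" for x
  have t0: "t x \<in> V \<and> t x \<noteq> x \<and> tw V E x (t x)" if "x \<in> V" for x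
  proof -
    have "\<exists>y. y \<in> V \<and> y \<noteq> x \<and> tw V E x y" using tw_all that by blast
    then show ?thesis unfolding t_def by (rule someI_ex)
  qed
  have t: "t x \<in> V" "t x \<noteq> x" "tw V E x (t x)" if "x \<in> V" for x
    using t0[OF that] by auto
  have pg: "g x + g (t x) \<ge> 0" if "x \<in> V" for x
    using pair_ge[OF G C t(3)[OF that] t(2)[OF that, symmetric] h] unfolding g_def by simp
  have tA: "t ` A \<subseteq> V - A"
  proof
    fix w assume "w \<in> t ` A"
    then obtain x where x: "x \<in> A" "w = t x" by blast
    then show "w \<in> V - A" using pg[of x] t[of x] unfolding A_def g_def by auto
  qed
  have inj: "inj_on t A"
  proof (rule inj_onI)
    fix x x' assume a: "x \<in> A" "x' \<in> A" "t x = t x'"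
    show "x = x'"
    proof (rule ccontr)
      assume "x \<noteq> x'"
      have xV: "x \<in> V" "x' \<in> V" using a unfolding A_def by auto
      have twx: "tw V E x x'" using tw_trans[OF G t(3)[OF xV(1)] tw_sym[OF t(3)[OF xV(2)], folded a(3)]] .
      have "h x + h x' \<ge> 1" using pair_ge[OF G C twx \<open>x \<noteq> x'\<close> h] .
      moreover have "h x < 1/2" "h x' < 1/2" using a(1,2) unfolding A_def by auto
      ultimately show False by linarith
    qed
  qed
  have gnn: "g x \<ge> 0" if "x \<in> V - A" for x using that unfolding A_def g_def by auto
  have s1: "sum g V = sum g A + sum g (V - A)"
    using sum.subset_diff[of A V g] fin unfolding A_def by auto
  have s2: "sum g (V - A) \<ge> sum g (t ` A)"
    by (rule sum_mono2) (use fin tA gnn in auto)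
  have s3: "sum g (t ` A) = sum (\<lambda>x. g (t x)) A" using sum.reindex[OF inj] by simp
  have s4: "sum (\<lambda>x. g x + g (t x)) A = sum g A + sum (\<lambda>x. g (t x)) A" by (simp add: sum.distrib)
  have "sum g V \<ge> sum (\<lambda>x. g x + g (t x)) A" using s1 s2 s3 s4 by linarith
  moreover have "sum (\<lambda>x. g x + g (t x)) A \<ge> 0" by (rule sum_nonneg) (use pg in \<open>auto simp: A_def\<close>)
  ultimately have "sum g V \<ge> 0" by linarith
  moreover have "sum g V = sum h V - real (card V) / 2" unfolding g_def by (simp add: sum_subtractf)
  ultimately show ?thesis by simp
qed



lemma blowup_tw: fixes V :: "'a set" assumes G: "simple_graph V E" and bl: "in_blowup_family V E"
  shows "\<forall>x\<in>V. \<exists>y\<in>V. y \<noteq> x \<and> tw V E x y"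
proof
  fix x assume xV: "x \<in> V"
  obtain VH EH and \<phi> :: "'a \<Rightarrow> 'a" where b0: "simple_graph VH EH" "graph_connected VH EH" and b: "\<phi> ` V = VH"
      "\<forall>u\<in>VH. card {x\<in>V. \<phi> x = u} \<ge> 2
            \<and> ((\<forall>x\<in>V. \<forall>y\<in>V. \<phi> x = u \<and> \<phi> y = u \<and> x \<noteq> y \<longrightarrow> E x y)
               \<or> (\<forall>x\<in>V. \<forall>y\<in>V. \<phi> x = u \<and> \<phi> y = u \<longrightarrow> \<not> E x y))"
      "\<forall>x\<in>V. \<forall>y\<in>V. \<phi> x \<noteq> \<phi> y \<longrightarrow> (E x y \<longleftrightarrow> EH (\<phi> x) (\<phi> y))"
    using bl unfolding in_blowup_family_def by (elim exE conjE) blast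
  have u: "\<phi> x \<in> VH" using b(1) xV by blast
  have fin: "finite {z\<in>V. \<phi> z = \<phi> x}" using sgD(1)[OF G] by simp
  have "card {z\<in>V. \<phi> z = \<phi> x} \<ge> 2" using b(2)[rule_format, OF u, THEN conjunct1] .
  then obtain y where y: "y \<in> V" "\<phi> y = \<phi> x" "y \<noteq> x"
  proof -
    have "\<not> {z\<in>V. \<phi> z = \<phi> x} \<subseteq> {x}"
    proof
      assume "{z\<in>V. \<phi> z = \<phi> x} \<subseteq> {x}"
      then have "card {z\<in>V. \<phi> z = \<phi> x} \<le> card {x}" by (intro card_mono) auto
      then show False using \<open>card {z\<in>V. \<phi> z = \<phi> x} \<ge> 2\<close> by simp
    qed
    then show ?thesis using that by blast
  qed
  have "tw V E x y" unfolding tw_def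
  proof (intro conjI ballI impI)
    fix z assume z: "z \<in> V" "z \<noteq> x \<and> z \<noteq> y"
    show "E x z \<longleftrightarrow> E y z"
    proof (cases "\<phi> z = \<phi> x")
      case True
      have "(\<forall>a\<in>V. \<forall>c\<in>V. \<phi> a = \<phi> x \<and> \<phi> c = \<phi> x \<and> a \<noteq> c \<longrightarrow> E a c)
               \<or> (\<forall>a\<in>V. \<forall>c\<in>V. \<phi> a = \<phi> x \<and> \<phi> c = \<phi> x \<longrightarrow> \<not> E a c)"
        using b(2)[rule_format, OF u, THEN conjunct2] .
      then show ?thesis
      proof
        assume cl: "\<forall>a\<in>V. \<forall>c\<in>V. \<phi> a = \<phi> x \<and> \<phi> c = \<phi> x \<and> a \<noteq> c \<longrightarrow> E a c"
        have "E x z" using cl[rule_format, OF xV z(1)] True z(2) by auto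
        moreover have "E y z" using cl[rule_format, OF y(1) z(1)] True z(2) y(2) by auto
        ultimately show ?thesis by simp
      next
        assume cl: "\<forall>a\<in>V. \<forall>c\<in>V. \<phi> a = \<phi> x \<and> \<phi> c = \<phi> x \<longrightarrow> \<not> E a c"
        have "\<not> E x z" using cl[rule_format, OF xV z(1)] True by simp
        moreover have "\<not> E y z" using cl[rule_format, OF y(1) z(1)] True y(2) by simp
        ultimately show ?thesis by simp
      qed
    next
      case False
      then have "\<phi> x \<noteq> \<phi> z" "\<phi> y \<noteq> \<phi> z" using y by auto
      then show ?thesis using b(3) y(1) z(1) xV y(2) by simp
    qed
  qed (use xV y in auto)
  then show "\<exists>y\<in>V. y \<noteq> x \<and> tw V E x y" using y by blast
qed

lemma tw3: assumes G: "simple_graph V E" and "tw V E x y" "tw V E x z" "x \<noteq> y" "x \<noteq> z" "y \<noteq> z" "E x y"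
  shows "E x z"
proof -
  have "tw V E y z" using tw_trans[OF G tw_sym[OF assms(2)] assms(3)] .
  moreover have "x \<in> V" using assms(2) unfolding tw_def by simp
  ultimately have "E y x \<longleftrightarrow> E z x" using assms unfolding tw_def by blast
  then show ?thesis using assms(7) sgD(4)[OF G] by blast
qed

lemma tw_clique: assumes G: "simple_graph V E" and "tw V E a b" "tw V E a c" "tw V E a d"
  "a \<noteq> b" "E a b" "c \<noteq> d"
  shows "E c d"
proof -
  have aw: "E a w" if "tw V E a w" "w \<noteq> a" for w
    using tw3[OF G assms(2) that(1)] assms(5,6) that(2) by (cases "w = b") auto
  show ?thesis
  proof (cases "c = a")
    case True then show ?thesis using aw assms by auto
  next
    case ca: False
    show ?thesis
    proof (cases "d = a")
      case True then show ?thesis using aw[OF assms(3) ca] sgD(4)[OF G] by auto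
    next
      case False
      have "tw V E c a" "tw V E c d" using tw_sym[OF assms(3)] tw_trans[OF G tw_sym[OF assms(3)] assms(4)] by auto
      moreover have "E c a" using aw[OF assms(3) ca] sgD(4)[OF G] by auto
      ultimately show ?thesis using tw3[OF G] ca False assms(7) by metis
    qed
  qed
qed

lemma tw_cross: assumes G: "simple_graph V E" and "tw V E a a'" "tw V E b b'" "\<not> tw V E a b"
  shows "E a b \<longleftrightarrow> E a' b'"
proof -
  have V: "a \<in> V" "a' \<in> V" "b \<in> V" "b' \<in> V" using assms unfolding tw_def by auto
  have ab: "a \<noteq> b" using assms(4) V unfolding tw_def by auto
  have 1: "E a b \<longleftrightarrow> E a' b"
  proof (cases "a = a'")
    case False
    have "b \<noteq> a'" using assms(2,4) by auto
    then show ?thesis using assms(2) V ab unfolding tw_def by auto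
  qed simp
  have 2: "E b a' \<longleftrightarrow> E b' a'"
  proof (cases "b = b'")
    case False
    have "\<not> tw V E a' b" using assms(4) tw_trans[OF G assms(2)] by blast
    moreover have "\<not> tw V E a' b'" using assms(4) tw_trans[OF G tw_trans[OF G assms(2)] tw_sym[OF assms(3)]] by blast
    ultimately have "a' \<noteq> b" "a' \<noteq> b'" using V unfolding tw_def by auto
    then show ?thesis using assms(3) V unfolding tw_def by auto
  qed simp
  show ?thesis using 1 2 sgD(4)[OF G] by blast
qed



lemma tw_blowup: fixes V :: "'a set" assumes G: "simple_graph V E" and C: "graph_connected V E"
  and tw_all: "\<forall>x\<in>V. \<exists>y\<in>V. y \<noteq> x \<and> tw V E x y"
  shows "in_blowup_family V E"
proof -
  define \<phi> where "\<phi> x = (SOME r. r \<in> {y. tw V E x y})" for x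
  have refl: "tw V E x x" if "x \<in> V" for x using that unfolding tw_def by auto
  have phi: "tw V E x (\<phi> x)" if "x \<in> V" for x
    unfolding \<phi>_def using refl[OF that] by (metis mem_Collect_eq someI_ex)
  have phi_eq: "\<phi> x = \<phi> y" if "tw V E x y" for x y
  proof -
    have "{z. tw V E x z} = {z. tw V E y z}"
    proof (intro set_eqI iffI; simp)
      fix z assume "tw V E x z" then show "tw V E y z" using tw_trans[OF G tw_sym[OF that]] by simp
    next
      fix z assume "tw V E y z" then show "tw V E x z" using tw_trans[OF G that] by simp
    qed
    then show ?thesis unfolding \<phi>_def by simp
  qed
  have phi_tw: "tw V E x y" if "x \<in> V" "y \<in> V" "\<phi> x = \<phi> y" for x y
    using tw_trans[OF G phi[OF that(1)] tw_sym[OF phi[OF that(2)], folded that(3)]] .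
  define VH where "VH = \<phi> ` V"
  define EH where "EH u v = (E u v \<and> u \<in> VH \<and> v \<in> VH)" for u v
  have phiV: "\<phi> x \<in> V" if "x \<in> V" for x using phi[OF that] unfolding tw_def by auto
  have cross: "E x y \<longleftrightarrow> EH (\<phi> x) (\<phi> y)" if "x \<in> V" "y \<in> V" "\<phi> x \<noteq> \<phi> y" for x y
  proof -
    have nt: "\<not> tw V E x y" using phi_eq[of x y] that(3) by auto
    have "E x y \<longleftrightarrow> E (\<phi> x) (\<phi> y)" using tw_cross[OF G phi[OF that(1)] phi[OF that(2)] nt] .
    then show ?thesis unfolding EH_def VH_def using that by auto
  qed
  have sgH: "simple_graph VH EH"
    using sgD[OF G] unfolding simple_graph_def EH_def VH_def by auto
  have VHne: "VH \<noteq> {}" using C unfolding graph_connected_def VH_def by auto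
  have step: "(sup EH (=))\<^sup>*\<^sup>* (\<phi> x) (\<phi> y)" if "E\<^sup>*\<^sup>* x y" "x \<in> V" for x y
    using that(1)
  proof (induction rule: rtranclp_induct)
    case base then show ?case by simp
  next
    case (step y z)
    have "y \<in> V" "z \<in> V" using step(2) sgD[OF G] by metis+
    then have "sup EH (=) (\<phi> y) (\<phi> z)"
    proof (cases "\<phi> y = \<phi> z")
      case False
      then have "EH (\<phi> y) (\<phi> z)" using cross[OF \<open>y \<in> V\<close> \<open>z \<in> V\<close> False] step(2) by simp
      then show ?thesis by simp
    qed simp
    then show ?case using step(3) by (metis rtranclp.rtrancl_into_rtrancl)
  qed
  have connH: "graph_connected VH EH" unfolding graph_connected_def
  proof (intro conjI ballI VHne)
    fix u v assume "u \<in> VH" "v \<in> VH"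
    then obtain x y where xy: "x \<in> V" "y \<in> V" "u = \<phi> x" "v = \<phi> y" unfolding VH_def by blast
    obtain n where "(E^^n) x y" using conn_rel[OF G C xy(1,2)] by blast
    then have "E\<^sup>*\<^sup>* x y" by (rule relpowp_imp_rtranclp)
    then have "(sup EH (=))\<^sup>*\<^sup>* u v" using step[OF _ xy(1)] xy(3,4) by simp
    then have "EH\<^sup>*\<^sup>* u v" using rtranclp_reflclp[of EH] by simp
    then obtain m where "(EH^^m) u v" using rtranclp_imp_relpowp by metis
    then show "\<exists>n. walk_of_length VH EH u v n" using walk_iff[OF sgH] \<open>u \<in> VH\<close> by blast
  qed
  have fib: "card {x\<in>V. \<phi> x = u} \<ge> 2
            \<and> ((\<forall>x\<in>V. \<forall>y\<in>V. \<phi> x = u \<and> \<phi> y = u \<and> x \<noteq> y \<longrightarrow> E x y)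
               \<or> (\<forall>x\<in>V. \<forall>y\<in>V. \<phi> x = u \<and> \<phi> y = u \<longrightarrow> \<not> E x y))" if uH: "u \<in> VH" for u
  proof
    obtain a where a: "a \<in> V" "\<phi> a = u" using uH unfolding VH_def by blast
    obtain b where b: "b \<in> V" "b \<noteq> a" "tw V E a b" using tw_all a by blast
    have "\<phi> b = u" using phi_eq[OF b(3)] a by simp
    then have "{a, b} \<subseteq> {x\<in>V. \<phi> x = u}" using a b by auto
    then have "card {a, b} \<le> card {x\<in>V. \<phi> x = u}" by (rule card_mono[rotated]) (use sgD(1)[OF G] in auto)
    then show "card {x\<in>V. \<phi> x = u} \<ge> 2" using b(2) by simp
    show "(\<forall>x\<in>V. \<forall>y\<in>V. \<phi> x = u \<and> \<phi> y = u \<and> x \<noteq> y \<longrightarrow> E x y)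
               \<or> (\<forall>x\<in>V. \<forall>y\<in>V. \<phi> x = u \<and> \<phi> y = u \<longrightarrow> \<not> E x y)"
    proof (cases "\<exists>x\<in>V. \<exists>y\<in>V. \<phi> x = u \<and> \<phi> y = u \<and> E x y")
      case True
      then obtain x y where xy: "x \<in> V" "y \<in> V" "\<phi> x = u" "\<phi> y = u" "E x y" by blast
      have "x \<noteq> y" using xy(5) sgD(5)[OF G] by metis
      have "E c d" if "c \<in> V" "d \<in> V" "\<phi> c = u" "\<phi> d = u" "c \<noteq> d" for c d
        using tw_clique[OF G phi_tw[OF xy(1,2)] phi_tw[OF xy(1) that(1)] phi_tw[OF xy(1) that(2)]
            \<open>x \<noteq> y\<close> xy(5) that(5)] xy that by simp
      then show ?thesis by blast
    qed blast
  qed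
  show ?thesis unfolding in_blowup_family_def
    apply (rule exI[of _ VH], rule exI[of _ EH], rule exI[of _ \<phi>])
    using sgH connH fib cross unfolding VH_def by simp
qed



lemma R_sub_V: "resolving_set_k k V E x y \<subseteq> V" unfolding resolving_set_k_def by auto

lemma half_res: assumes G: "simple_graph V E" and C: "graph_connected V E"
  shows "k_trunc_resolving_function k V E (\<lambda>_. 1/2)"
  unfolding k_trunc_resolving_function_def
proof (intro conjI ballI impI)
  fix x y assume a: "x \<in> V" "y \<in> V" "x \<noteq> y"
  have fin: "finite (resolving_set_k k V E x y)" using finite_subset[OF R_sub_V sgD(1)[OF G]] .
  have "(\<Sum>_\<in>{x,y}. (1/2::real)) \<le> (\<Sum>_\<in>resolving_set_k k V E x y. 1/2)"
    by (rule sum_mono2[OF fin]) (use xy_R[OF G C a] in auto)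
  then show "1 \<le> (\<Sum>_\<in>resolving_set_k k V E x y. (1/2::real))" using a(3) by simp
qed auto

lemma small_res: assumes G: "simple_graph V E" and C: "graph_connected V E" and k: "k \<ge> 1"
  and v: "v \<in> V" "\<forall>y\<in>V. y \<noteq> v \<longrightarrow> \<not> tw V E v y"
  shows "\<exists>h. k_trunc_resolving_function k V E h \<and> sum h V < real (card V) / 2"
proof -
  define T where "T = {x\<in>V. \<forall>y\<in>V. y \<noteq> x \<longrightarrow> \<not> tw V E x y}"
  define h :: "'a \<Rightarrow> real" where "h x = (if x \<in> T then 1/3 else 1/2)" for x
  have fin: "finite V" using sgD(1)[OF G] .
  have hge: "h x \<ge> 1/3" for x unfolding h_def by auto
  have res: "k_trunc_resolving_function k V E h"
    unfolding k_trunc_resolving_function_def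
  proof (intro conjI ballI impI)
    fix x y assume a: "x \<in> V" "y \<in> V" "x \<noteq> y"
    let ?R = "resolving_set_k k V E x y"
    have finR: "finite ?R" using finite_subset[OF R_sub_V fin] .
    have xyR: "x \<in> ?R" "y \<in> ?R" using xy_R[OF G C a] by auto
    have hnn: "h z \<ge> 0" for z unfolding h_def by auto
    show "1 \<le> sum h ?R"
    proof (cases "x \<in> T \<or> y \<in> T")
      case False
      have "sum h {x, y} \<le> sum h ?R" by (rule sum_mono2[OF finR]) (use xyR hnn in auto)
      then show ?thesis using False a(3) unfolding h_def by simp
    next
      case True
      have "\<not> tw V E x y"
      proof
        assume t: "tw V E x y"
        show False
        proof (cases "x \<in> T")
          case True
          then show False using t a(2,3) unfolding T_def by auto
        next
          case False
          then have "y \<in> T" using \<open>x \<in> T \<or> y \<in> T\<close> by simp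
          then show False using tw_sym[OF t] a(1,3) unfolding T_def by auto
        qed
      qed
      then obtain z where z: "z \<in> V" "z \<noteq> x" "z \<noteq> y" "\<not> (E x z \<longleftrightarrow> E y z)"
        using a unfolding tw_def by auto
      have tz: "tdist k V E x z \<noteq> tdist k V E y z"
      proof (cases "E x z")
        case True
        then have "\<not> E y z" using z(4) by simp
        then have "gdist V E y z \<ge> 2" using gdist_two[OF G C a(2) z(1)] z(3) by simp
        moreover have "gdist V E x z = 1" using gdist_one[OF G True] .
        ultimately show ?thesis using k unfolding tdist_def by (simp add: min_def)
      next
        case False
        then have "E y z" using z(4) by simp
        then have "gdist V E y z = 1" using gdist_one[OF G] by simp
        moreover have "gdist V E x z \<ge> 2" using gdist_two[OF G C a(1) z(1)] z(2) False by simp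
        ultimately show ?thesis using k unfolding tdist_def by (simp add: min_def)
      qed
      have zR: "z \<in> ?R" using z(1) tz unfolding resolving_set_k_def by simp
      have "sum h {x, y, z} \<le> sum h ?R" by (rule sum_mono2[OF finR]) (use xyR zR hnn in auto)
      moreover have "sum h {x, y, z} = h x + h y + h z" using a(3) z(2,3) by simp
      ultimately show ?thesis using hge[of x] hge[of y] hge[of z] by linarith
    qed
  qed (auto simp: h_def)
  have "v \<in> T" using v unfolding T_def by blast
  then have "sum h V < sum (\<lambda>_. 1/2) V"
    by (intro sum_strict_mono_ex1[OF fin]) (use v(1) in \<open>auto simp: h_def\<close>)
  then have "sum h V < real (card V) / 2" by simp
  then show ?thesis using res by blast
qed

theorem corollary2p9:
  fixes V :: "'a set" and E :: "'a \<Rightarrow> 'a \<Rightarrow> bool" and k :: nat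
  assumes "simple_graph V E" and "graph_connected V E" and "card V \<ge> 2" and "k \<ge> 1"
  shows "frac_trunc_dim k V E = real (card V) / 2 \<longleftrightarrow> in_blowup_family V E"
proof -
  note G = assms(1) and C = assms(2)
  define S where "S = {sum h V | h. k_trunc_resolving_function k V E h}"
  have hS: "sum (\<lambda>_. 1/2) V \<in> S" unfolding S_def using half_res[OF G C] by blast
  have hv: "sum (\<lambda>_. (1/2::real)) V = real (card V) / 2" by simp
  have bdd: "bdd_below S"
  proof
    fix s assume "s \<in> S"
    then obtain h where "s = sum h V" "k_trunc_resolving_function k V E h" unfolding S_def by blast
    then show "0 \<le> s" unfolding k_trunc_resolving_function_def by (auto intro: sum_nonneg)
  qed
  have dimdef: "frac_trunc_dim k V E = Inf S" unfolding frac_trunc_dim_def S_def ..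
  have up: "Inf S \<le> real (card V) / 2" using cInf_lower[OF hS bdd] hv by simp
  show ?thesis
  proof
    assume eq: "frac_trunc_dim k V E = real (card V) / 2"
    show "in_blowup_family V E"
    proof (rule ccontr)
      assume nb: "\<not> in_blowup_family V E"
      have "\<not> (\<forall>x\<in>V. \<exists>y\<in>V. y \<noteq> x \<and> tw V E x y)" using tw_blowup[OF G C] nb by blast
      then obtain v where v: "v \<in> V" "\<forall>y\<in>V. y \<noteq> v \<longrightarrow> \<not> tw V E v y" by blast
      obtain h where h: "k_trunc_resolving_function k V E h" "sum h V < real (card V) / 2"
        using small_res[OF G C assms(4) v] by blast
      have "sum h V \<in> S" unfolding S_def using h(1) by blast
      then have "Inf S \<le> sum h V" using cInf_lower[OF _ bdd] by blast
      then show False using eq dimdef h(2) by simp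
    qed
  next
    assume bl: "in_blowup_family V E"
    have all: "\<forall>x\<in>V. \<exists>y\<in>V. y \<noteq> x \<and> tw V E x y" using blowup_tw[OF G bl] .
    have "real (card V) / 2 \<le> Inf S"
    proof (rule cInf_greatest)
      show "S \<noteq> {}" using hS by blast
    next
      fix s assume "s \<in> S"
      then obtain h where "s = sum h V" "k_trunc_resolving_function k V E h" unfolding S_def by blast
      then show "real (card V) / 2 \<le> s" using sum_lower[OF G C all] by simp
    qed
    then show "frac_trunc_dim k V E = real (card V) / 2" using up dimdef by simp
  qed
qed


end
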